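(* Let $\Omega\subset\mathbb{R}^{4p}\simeq\mathbb{C}^{2p}$ be open. A differentiable function $F:\Omega\to\mathbb{S}$ is q-monogenic in $\Omega$ if and only if $F$ is in $\Omega$ a simultaneous null solution of the four operators $\partial_{\underline z}$, $\partial_{\underline z}^\dagger$, $\partial_{\underline z}^J$ and $\partial_{\underline z}^{\dagger J}$.
   Context: Coordinates on $\mathbb{R}^{4p}$: $(X_1,\dots,X_{4p})=(x_1,y_1,\dots,x_{2p},y_{2p})$, $z_k=x_k+iy_k$, $\partial_{z_k}=\tfrac12(\partial_{x_k}-i\partial_{y_k})$, $\partial_{\bar z_k}=\tfrac12(\partial_{x_k}+i\partial_{y_k})$. $\mathbb{C}_{4p}$ is the complex Clifford algebra generated by $e_1,\dots,e_{4p}$ with $e_\alpha e_\beta+e_\beta e_\alpha=-2\delta_{\alpha\beta}$. Witt basis: $\mathfrak f_k=\tfrac12(-e_{2k-1}+ie_{2k})$, $\mathfrak f_k^\dagger=\tfrac12(e_{2k-1}+ie_{2k})$, $k=1,\dots,2p$. $I=\prod_{k=1}^{2p}\mathfrak f_k\mathfrak f_k^\dagger$, spinor space $\mathbb S=\mathbb C_{4p}I$. Operators (acting by left multiplication on $\mathbb S$-valued functions): $\partial_{\underline z}=\sum_{k=1}^{2p}\mathfrak f_k^\dagger\partial_{z_k}$, $\partial_{\underline z}^\dagger=\sum_{k=1}^{2p}\mathfrak f_k\partial_{\bar z_k}$, $\partial_{\underline z}^J=\sum_{j=1}^p(\mathfrak f_{2j-1}\partial_{z_{2j}}-\mathfrak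 f_{2j}\partial_{z_{2j-1}})$, $\partial_{\underline z}^{\dagger J}=\sum_{j=1}^p(\mathfrak f^\dagger_{2j-1}\partial_{\bar z_{2j}}-\mathfrak f^\dagger_{2j}\partial_{\bar z_{2j-1}})$. Define real linear maps: $\mathbb{I}(e_{2k-1})=e_{2k}$, $\mathbb{I}(e_{2k})=-e_{2k-1}$; for $j=1,\dots,p$: $\mathbb{J}(e_{4j-3})=e_{4j-1}$, $\mathbb{J}(e_{4j-2})=-e_{4j}$, $\mathbb{J}(e_{4j-1})=-e_{4j-3}$, $\mathbb{J}(e_{4j})=e_{4j-2}$; $\mathbb K=\mathbb I\mathbb J$. $\underline\partial=\sum_\alpha e_\alpha\partial_{X_\alpha}$, $\underline\partial_M=\sum_\alpha M(e_\alpha)\partial_{X_\alpha}$ for $M\in\{\mathbb I,\mathbb J,\mathbb K\}$. $F$ is q-monogenic in $\Omega$ if $\underline\partial F=\underline\partial_{\mathbb I}F=\underline\partial_{\mathbb J}F=\underline\partial_{\mathbb K}F=0$ there. *)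

theory Defs
  imports "HOL-Analysis.Analysis"
begin

text \<open>An element of the complex Clifford algebra is represented by its coefficient
  function on basis blades e_A, A a finite set of generator indices (increasing product).\<close>

type_synonym cl = "nat set \<Rightarrow> complex"

definition cl_zero :: cl where "cl_zero = (\<lambda>_. 0)"
definition blade :: "nat set \<Rightarrow> cl" where "blade A = (\<lambda>B. if B = A then 1 else 0)"
definition gen :: "nat \<Rightarrow> cl" where "gen k = blade {k}"
definition cl_add :: "cl \<Rightarrow> cl \<Rightarrow> cl" where "cl_add x y = (\<lambda>A. x A + y A)"
definition cl_scale :: "complex \<Rightarrow> cl \<Rightarrow> cl" where "cl_scale c x = (\<lambda>A. c * x A)"
definition cl_sum :: "('i \<Rightarrow> cl) \<Rightarrow> 'i set \<Rightarrow> cl" where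
  "cl_sum f S = (\<lambda>A. \<Sum>k\<in>S. f k A)"

definition cl_alg :: "nat \<Rightarrow> cl set" where
  "cl_alg n = {x. \<forall>A. x A \<noteq> 0 \<longrightarrow> A \<subseteq> {1..n}}"

text \<open>e_A e_B = (-1)^(#inversions + |A \<inter> B|) e_(A \<triangle> B).\<close>
definition cl_sign :: "nat set \<Rightarrow> nat set \<Rightarrow> complex" where
  "cl_sign A B = (-1) ^ (card {(a,b). a \<in> A \<and> b \<in> B \<and> b < a} + card (A \<inter> B))"

definition cl_mult :: "nat \<Rightarrow> cl \<Rightarrow> cl \<Rightarrow> cl" where
  "cl_mult n x y = (\<lambda>C. \<Sum>A\<in>Pow {1..n}. \<Sum>B\<in>Pow {1..n}.
      if (A - B) \<union> (B - A) = C then cl_sign A B * x A * y B else 0)"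

definition wf :: "nat \<Rightarrow> cl" where
  "wf k = cl_scale (1/2) (cl_add (cl_scale (-1) (gen (2*k-1))) (cl_scale \<i> (gen (2*k))))"
definition wfd :: "nat \<Rightarrow> cl" where
  "wfd k = cl_scale (1/2) (cl_add (gen (2*k-1)) (cl_scale \<i> (gen (2*k))))"

fun Iprod :: "nat \<Rightarrow> nat \<Rightarrow> cl" where
  "Iprod n 0 = blade {}"
| "Iprod n (Suc k) = cl_mult n (Iprod n k) (cl_mult n (wf (Suc k)) (wfd (Suc k)))"

definition spinorI :: "nat \<Rightarrow> cl" where "spinorI p = Iprod (4*p) (2*p)"

definition spinor_space :: "nat \<Rightarrow> cl set" where
  "spinor_space p = {cl_mult (4*p) a (spinorI p) | a. a \<in> cl_alg (4*p)}"

definition vcoef :: "cl \<Rightarrow> nat \<Rightarrow> complex" where "vcoef x m = x {m}"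

definition Iop :: "cl \<Rightarrow> cl" where
  "Iop x = (\<lambda>A. if is_singleton A then
      (let m = the_elem A in if odd m then - vcoef x (m+1) else vcoef x (m-1)) else 0)"

definition Jop :: "cl \<Rightarrow> cl" where
  "Jop x = (\<lambda>A. if is_singleton A then
      (let m = the_elem A in
        if m mod 4 = 1 then - vcoef x (m+2)
        else if m mod 4 = 2 then vcoef x (m+2)
        else if m mod 4 = 3 then vcoef x (m-2)
        else - vcoef x (m-2)) else 0)"

definition Kop :: "cl \<Rightarrow> cl" where "Kop x = Iop (Jop x)"

text \<open>The coordinates X_1..X_{4p} are given by a bijection ix from {1..4p} onto the
  index type of real^'n; X_\<alpha> = x $ ix \<alpha>.  Partial derivatives are taken componentwise.\<close>

definition pdX :: "(nat \<Rightarrow> 'n::finite) \<Rightarrow> (real^'n \<Rightarrow> cl) \<Rightarrow> nat \<Rightarrow> real^'n \<Rightarrow> cl" where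
  "pdX ix F \<alpha> x = (\<lambda>A. frechet_derivative (\<lambda>y. F y A) (at x) (axis (ix \<alpha>) 1))"

definition dz :: "(nat \<Rightarrow> 'n::finite) \<Rightarrow> (real^'n \<Rightarrow> cl) \<Rightarrow> nat \<Rightarrow> real^'n \<Rightarrow> cl" where
  "dz ix F k x = cl_scale (1/2) (cl_add (pdX ix F (2*k-1) x) (cl_scale (-\<i>) (pdX ix F (2*k) x)))"

definition dzb :: "(nat \<Rightarrow> 'n::finite) \<Rightarrow> (real^'n \<Rightarrow> cl) \<Rightarrow> nat \<Rightarrow> real^'n \<Rightarrow> cl" where
  "dzb ix F k x = cl_scale (1/2) (cl_add (pdX ix F (2*k-1) x) (cl_scale \<i> (pdX ix F (2*k) x)))"

definition Dz :: "nat \<Rightarrow> (nat \<Rightarrow> 'n::finite) \<Rightarrow> (real^'n \<Rightarrow> cl) \<Rightarrow> real^'n \<Rightarrow> cl" where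
  "Dz p ix F x = cl_sum (\<lambda>k. cl_mult (4*p) (wfd k) (dz ix F k x)) {1..2*p}"

definition Dz_dag :: "nat \<Rightarrow> (nat \<Rightarrow> 'n::finite) \<Rightarrow> (real^'n \<Rightarrow> cl) \<Rightarrow> real^'n \<Rightarrow> cl" where
  "Dz_dag p ix F x = cl_sum (\<lambda>k. cl_mult (4*p) (wf k) (dzb ix F k x)) {1..2*p}"

definition Dz_J :: "nat \<Rightarrow> (nat \<Rightarrow> 'n::finite) \<Rightarrow> (real^'n \<Rightarrow> cl) \<Rightarrow> real^'n \<Rightarrow> cl" where
  "Dz_J p ix F x = cl_sum (\<lambda>j. cl_add (cl_mult (4*p) (wf (2*j-1)) (dz ix F (2*j) x))
        (cl_scale (-1) (cl_mult (4*p) (wf (2*j)) (dz ix F (2*j-1) x)))) {1..p}"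

definition Dz_dag_J :: "nat \<Rightarrow> (nat \<Rightarrow> 'n::finite) \<Rightarrow> (real^'n \<Rightarrow> cl) \<Rightarrow> real^'n \<Rightarrow> cl" where
  "Dz_dag_J p ix F x = cl_sum (\<lambda>j. cl_add (cl_mult (4*p) (wfd (2*j-1)) (dzb ix F (2*j) x))
        (cl_scale (-1) (cl_mult (4*p) (wfd (2*j)) (dzb ix F (2*j-1) x)))) {1..p}"

definition dirac :: "nat \<Rightarrow> (nat \<Rightarrow> 'n::finite) \<Rightarrow> (cl \<Rightarrow> cl) \<Rightarrow> (real^'n \<Rightarrow> cl) \<Rightarrow> real^'n \<Rightarrow> cl" where
  "dirac p ix M F x = cl_sum (\<lambda>\<alpha>. cl_mult (4*p) (M (gen \<alpha>)) (pdX ix F \<alpha> x)) {1..4*p}"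

definition q_monogenic :: "nat \<Rightarrow> (nat \<Rightarrow> 'n::finite) \<Rightarrow> (real^'n) set \<Rightarrow> (real^'n \<Rightarrow> cl) \<Rightarrow> bool" where
  "q_monogenic p ix \<Omega> F \<longleftrightarrow> (\<forall>x\<in>\<Omega>.
      dirac p ix id F x = cl_zero \<and> dirac p ix Iop F x = cl_zero \<and>
      dirac p ix Jop F x = cl_zero \<and> dirac p ix Kop F x = cl_zero)"

end

theory Submission
  imports Defs
begin

lemma mult_add1[simp]: "cl_mult n (cl_add a b) y C = cl_mult n a y C + cl_mult n b y C"
  unfolding cl_mult_def cl_add_def
  by (auto simp: sum.distrib[symmetric] algebra_simps intro!: sum.cong)

lemma mult_scale1[simp]: "cl_mult n (cl_scale c a) y C = c * cl_mult n a y C"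
  unfolding cl_mult_def cl_scale_def
  by (auto simp: sum_distrib_left algebra_simps intro!: sum.cong)

lemma mult_add2[simp]: "cl_mult n y (cl_add a b) C = cl_mult n y a C + cl_mult n y b C"
  unfolding cl_mult_def cl_add_def
  by (auto simp: sum.distrib[symmetric] algebra_simps intro!: sum.cong)

lemma mult_scale2[simp]: "cl_mult n y (cl_scale c a) C = c * cl_mult n y a C"
  unfolding cl_mult_def cl_scale_def
  by (auto simp: sum_distrib_left algebra_simps intro!: sum.cong)

lemma gen_odd_w: "gen (2*k-1) = cl_add (wfd k) (cl_scale (-1) (wf k))"
  unfolding wf_def wfd_def cl_add_def cl_scale_def by (auto simp: algebra_simps)

lemma gen_even_w: "gen (2*k) = cl_scale (-\<i>) (cl_add (wf k) (wfd k))"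
  unfolding wf_def wfd_def cl_add_def cl_scale_def by (auto simp: algebra_simps)

lemma gen_app: "gen a A = (if A = {a} then 1 else 0)"
  unfolding gen_def blade_def by simp

lemma Iop_odd: "odd m \<Longrightarrow> Iop (gen m) = gen (m+1)"
  unfolding Iop_def vcoef_def
  by (auto simp: fun_eq_iff gen_app is_singleton_def Let_def)

lemma Iop_even: "even m \<Longrightarrow> m \<ge> 2 \<Longrightarrow> Iop (gen m) = cl_scale (-1) (gen (m-1))"
  unfolding Iop_def vcoef_def cl_scale_def
  by (auto simp: fun_eq_iff gen_app is_singleton_def Let_def)

lemma gen_single: "gen a {m} = (if m = a then 1 else 0)"
  unfolding gen_def blade_def by simp
lemma Jop_single: "Jop (gen a) {m} = (if m mod 4 = 1 then (if m+2 = a then -1 else 0) else if m mod 4 = 2 then (if m+2=a then 1 else 0) else if m mod 4 = 3 then (if m-2 = a then 1 else 0) else (if m-2=a then -1 else 0))"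
  unfolding Jop_def vcoef_def by (simp add: gen_app Let_def)
lemma Jop_ns: "\<not> is_singleton A \<Longrightarrow> Jop x A = 0"
  unfolding Jop_def by simp
lemma m4: "(m::nat) = 0 \<or> (\<exists>q. m = 4*q+1 \<or> m = 4*q+2 \<or> m = 4*q+3 \<or> m = 4*q+4)"
  by presburger
lemma JS1: "Jop (gen a) {4*q+1} = (if a = 4*q+3 then -1 else 0)"
proof -
  have h: "(4*q+1) mod 4 = (1::nat)" by presburger
  show ?thesis unfolding Jop_single h by auto
qed
lemma JS2: "Jop (gen a) {4*q+2} = (if a = 4*q+4 then 1 else 0)"
proof -
  have h: "(4*q+2) mod 4 = (2::nat)" by presburger
  show ?thesis unfolding Jop_single h by auto
qed
lemma JS3: "Jop (gen a) {4*q+3} = (if a = 4*q+1 then 1 else 0)"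
proof -
  have h: "(4*q+3) mod 4 = (3::nat)" by presburger
  show ?thesis unfolding Jop_single h by auto
qed
lemma JS4: "Jop (gen a) {4*q+4} = (if a = 4*q+2 then -1 else 0)"
proof -
  have h: "(4*q+4) mod 4 = (0::nat)" by presburger
  show ?thesis unfolding Jop_single h by auto
qed
lemma JS0: "a \<noteq> 0 \<Longrightarrow> Jop (gen a) {0} = 0"
  by (simp add: Jop_single)
lemma single_cases: "(\<And>A. \<not> is_singleton A \<Longrightarrow> f A = g A) \<Longrightarrow> (\<And>m. f {m} = g {m}) \<Longrightarrow> f = g"
  by (metis is_singletonE ext)
lemma mcases: "(P 0) \<Longrightarrow> (\<And>q. P (4*q+1)) \<Longrightarrow> (\<And>q. P (4*q+2)) \<Longrightarrow> (\<And>q. P (4*q+3)) \<Longrightarrow> (\<And>q. P (4*q+4)) \<Longrightarrow> P (m::nat)"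
  using m4[of m] by auto

lemma Jop_1_aux: "Jop (gen (4*i+1)) = gen (4*i+3)"
  apply (rule single_cases)
   apply (simp add: Jop_ns gen_app is_singleton_def)
  subgoal for m apply (rule mcases[of _ m]) apply (simp_all only: JS1 JS2 JS3 JS4) apply (simp_all add: JS0 gen_single) by presburger+
  done
lemma Jop_2_aux: "Jop (gen (4*i+2)) = cl_scale (-1) (gen (4*i+4))"
  apply (rule single_cases)
   apply (simp add: Jop_ns gen_app is_singleton_def cl_scale_def)
  subgoal for m apply (rule mcases[of _ m]) apply (simp_all only: JS1 JS2 JS3 JS4) apply (simp_all add: JS0 gen_single cl_scale_def) by presburger+
  done
lemma Jop_3_aux: "Jop (gen (4*i+3)) = cl_scale (-1) (gen (4*i+1))"
  apply (rule single_cases)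
   apply (simp add: Jop_ns gen_app is_singleton_def cl_scale_def)
  subgoal for m apply (rule mcases[of _ m]) apply (simp_all only: JS1 JS2 JS3 JS4) apply (simp_all add: JS0 gen_single cl_scale_def) by presburger+
  done
lemma Jop_4_aux: "Jop (gen (4*i+4)) = gen (4*i+2)"
  apply (rule single_cases)
   apply (simp add: Jop_ns gen_app is_singleton_def)
  subgoal for m apply (rule mcases[of _ m]) apply (simp_all only: JS1 JS2 JS3 JS4) apply (simp_all add: JS0 gen_single) by presburger+
  done
lemma Jop_1: "j \<ge> 1 \<Longrightarrow> Jop (gen (4*j-3)) = gen (4*j-1)"
  using Jop_1_aux[of "j-1"] by (cases j) (simp_all add: algebra_simps)
lemma Jop_2: "j \<ge> 1 \<Longrightarrow> Jop (gen (4*j-2)) = cl_scale (-1) (gen (4*j))"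
  using Jop_2_aux[of "j-1"] by (cases j) (simp_all add: algebra_simps)
lemma Jop_3: "j \<ge> 1 \<Longrightarrow> Jop (gen (4*j-1)) = cl_scale (-1) (gen (4*j-3))"
  using Jop_3_aux[of "j-1"] by (cases j) (simp_all add: algebra_simps)
lemma Jop_4: "j \<ge> 1 \<Longrightarrow> Jop (gen (4*j)) = gen (4*j-2)"
  using Jop_4_aux[of "j-1"] by (cases j) (simp_all add: algebra_simps)

lemma Iop_scale: "Iop (cl_scale c x) = cl_scale c (Iop x)"
  unfolding Iop_def vcoef_def cl_scale_def by (auto simp: fun_eq_iff Let_def)

lemma Kop_1: assumes "j \<ge> 1" shows "Kop (gen (4*j-3)) = gen (4*j)"
proof -
  have a: "Jop (gen (4*j-3)) = gen (4*j-1)" by (rule Jop_1[OF assms])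
  have b: "Iop (gen (4*j-1)) = gen (4*j)" using Iop_odd[of "4*j-1"] assms by (simp add: algebra_simps)
  show ?thesis unfolding Kop_def a b ..
qed
lemma Kop_2: assumes "j \<ge> 1" shows "Kop (gen (4*j-2)) = gen (4*j-1)"
proof -
  have a: "Jop (gen (4*j-2)) = cl_scale (-1) (gen (4*j))" by (rule Jop_2[OF assms])
  have b: "Iop (gen (4*j)) = cl_scale (-1) (gen (4*j-1))" using Iop_even[of "4*j"] assms by simp
  show ?thesis unfolding Kop_def a Iop_scale b by (simp add: cl_scale_def)
qed
lemma Kop_3: assumes "j \<ge> 1" shows "Kop (gen (4*j-1)) = cl_scale (-1) (gen (4*j-2))"
proof -
  have a: "Jop (gen (4*j-1)) = cl_scale (-1) (gen (4*j-3))" by (rule Jop_3[OF assms])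
  have b: "Iop (gen (4*j-3)) = gen (4*j-2)" using Iop_odd[of "4*j-3"] assms
  proof -
    have o: "odd (4*j-3)" using assms by presburger
    have e: "4*j-3+1 = 4*j-2" using assms by simp
    show ?thesis using Iop_odd[OF o] unfolding e .
  qed
  show ?thesis unfolding Kop_def a Iop_scale b ..
qed
lemma Kop_4: assumes "j \<ge> 1" shows "Kop (gen (4*j)) = cl_scale (-1) (gen (4*j-3))"
proof -
  have a: "Jop (gen (4*j)) = gen (4*j-2)" by (rule Jop_4[OF assms])
  have b: "Iop (gen (4*j-2)) = cl_scale (-1) (gen (4*j-3))"
  proof -
    have o: "even (4*j-2)" "4*j-2 \<ge> 2" using assms by presburger+
    have e: "4*j-2-1 = 4*j-3" using assms by simp
    show ?thesis using Iop_even[OF o] unfolding e .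
  qed
  show ?thesis unfolding Kop_def a b ..
qed

lemma sum_pairs: "(\<Sum>a\<in>{1..2*m}. g a) = (\<Sum>k\<in>{1..m}. g (2*k-1) + g (2*k))"
  for g :: "nat \<Rightarrow> 'a::comm_monoid_add"
proof (induction m)
  case 0 then show ?case by simp
next
  case (Suc m)
  have "{1..2*Suc m} = insert (2*m+2) (insert (2*m+1) {1..2*m})" by auto
  then have "(\<Sum>a\<in>{1..2*Suc m}. g a) = g (2*m+2) + (g (2*m+1) + (\<Sum>a\<in>{1..2*m}. g a))"
    by simp
  also have "\<dots> = (\<Sum>k\<in>{1..m}. g (2*k-1) + g (2*k)) + (g (2*Suc m - 1) + g (2*Suc m))"
    using Suc by (simp add: algebra_simps)
  finally show ?case by (simp add: sum.cl_ivl_Suc)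
qed

lemma sum_quads: "(\<Sum>a\<in>{1..4*m}. g a) = (\<Sum>k\<in>{1..m}. g (4*k-3) + g (4*k-2) + g (4*k-1) + g (4*k))"
  for g :: "nat \<Rightarrow> 'a::comm_monoid_add"
proof (induction m)
  case 0 then show ?case by simp
next
  case (Suc m)
  have "{1..4*Suc m} = insert (4*m+4) (insert (4*m+3) (insert (4*m+2) (insert (4*m+1) {1..4*m})))" by auto
  then have "(\<Sum>a\<in>{1..4*Suc m}. g a) = g (4*m+4) + (g (4*m+3) + (g (4*m+2) + (g (4*m+1) + (\<Sum>a\<in>{1..4*m}. g a))))"
    by simp
  also have "\<dots> = (\<Sum>k\<in>{1..m}. g (4*k-3) + g (4*k-2) + g (4*k-1) + g (4*k)) + (g (4*Suc m - 3) + g (4*Suc m - 2) + g (4*Suc m - 1) + g (4*Suc m))"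
    using Suc by (simp add: algebra_simps)
  finally show ?case by (simp add: sum.cl_ivl_Suc)
qed

lemma ar1: "j \<ge> 1 \<Longrightarrow> 2*(2*j-1)-1 = 4*j-(3::nat)" by simp
lemma ar2: "j \<ge> 1 \<Longrightarrow> 2*(2*j-1) = 4*j-(2::nat)" by simp
lemma ar3: "2*(2*j)-1 = 4*j-(1::nat)" by simp
lemma ar4: "2*(2*j) = 4*(j::nat)" by simp

lemma gJ1: assumes "j \<ge> 1" shows "gen (4*j-3) = cl_add (wfd (2*j-1)) (cl_scale (-1) (wf (2*j-1)))"
  using gen_odd_w[of "2*j-1"] unfolding ar1[OF assms] .
lemma gJ2: assumes "j \<ge> 1" shows "gen (4*j-2) = cl_scale (-\<i>) (cl_add (wf (2*j-1)) (wfd (2*j-1)))"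
  using gen_even_w[of "2*j-1"] unfolding ar2[OF assms] .
lemma gJ3: "gen (4*j-1) = cl_add (wfd (2*j)) (cl_scale (-1) (wf (2*j)))"
  using gen_odd_w[of "2*j"] unfolding ar3 .
lemma gJ4: "gen (4*j) = cl_scale (-\<i>) (cl_add (wf (2*j)) (wfd (2*j)))"
  using gen_even_w[of "2*j"] unfolding ar4 .

lemma set4: "{1..4*p} = {1..2*(2*p::nat)}" by simp

lemmas lin = mult_add1 mult_scale1 mult_add2 mult_scale2

lemma D_id: "dirac p ix id F x C = 2*(Dz p ix F x C - Dz_dag p ix F x C)"
proof -
  have "dirac p ix id F x C = (\<Sum>k\<in>{1..2*p}.
     cl_mult (4*p) (gen (2*k-1)) (pdX ix F (2*k-1) x) C + cl_mult (4*p) (gen (2*k)) (pdX ix F (2*k) x) C)"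
    unfolding dirac_def cl_sum_def set4 sum_pairs id_apply ..
  also have "\<dots> = 2*(Dz p ix F x C - Dz_dag p ix F x C)"
    unfolding Dz_def Dz_dag_def cl_sum_def dz_def dzb_def gen_odd_w gen_even_w lin
      sum_subtractf[symmetric] sum_distrib_left
    by (rule sum.cong[OF refl], simp add: algebra_simps)
  finally show ?thesis .
qed

lemma D_I: "dirac p ix Iop F x C = -2*\<i>*(Dz p ix F x C + Dz_dag p ix F x C)"
proof -
  have "dirac p ix Iop F x C = (\<Sum>k\<in>{1..2*p}.
     cl_mult (4*p) (gen (2*k)) (pdX ix F (2*k-1) x) C - cl_mult (4*p) (gen (2*k-1)) (pdX ix F (2*k) x) C)"
    unfolding dirac_def cl_sum_def set4
  proof (subst sum_pairs, rule sum.cong[OF refl])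
    fix k assume k: "k \<in> {1..2*p}"
    have o: "odd (2*k-1)" using k by auto
    have e: "2*k-1+1 = 2*k" using k by auto
    have a: "Iop (gen (2*k-1)) = gen (2*k)" using Iop_odd[OF o] unfolding e .
    have b: "Iop (gen (2*k)) = cl_scale (-1) (gen (2*k-1))" using Iop_even[of "2*k"] k by auto
    show "cl_mult (4*p) (Iop (gen (2*k-1))) (pdX ix F (2*k-1) x) C + cl_mult (4*p) (Iop (gen (2*k))) (pdX ix F (2*k) x) C =
     cl_mult (4*p) (gen (2*k)) (pdX ix F (2*k-1) x) C - cl_mult (4*p) (gen (2*k-1)) (pdX ix F (2*k) x) C"
      unfolding a b lin by simp
  qed
  also have "\<dots> = -2*\<i>*(Dz p ix F x C + Dz_dag p ix F x C)"
    unfolding Dz_def Dz_dag_def cl_sum_def dz_def dzb_def gen_odd_w gen_even_w lin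
      sum.distrib[symmetric] sum_distrib_left
    by (rule sum.cong[OF refl], simp add: algebra_simps)
  finally show ?thesis .
qed

lemma D_J: "dirac p ix Jop F x C = 2*(Dz_J p ix F x C - Dz_dag_J p ix F x C)"
proof -
  have "dirac p ix Jop F x C = (\<Sum>j\<in>{1..p}.
     cl_mult (4*p) (gen (4*j-1)) (pdX ix F (4*j-3) x) C - cl_mult (4*p) (gen (4*j)) (pdX ix F (4*j-2) x) C
     - cl_mult (4*p) (gen (4*j-3)) (pdX ix F (4*j-1) x) C + cl_mult (4*p) (gen (4*j-2)) (pdX ix F (4*j) x) C)"
    unfolding dirac_def cl_sum_def sum_quads
  proof (rule sum.cong[OF refl])
    fix j assume "j \<in> {1..p}"
    then have j: "j \<ge> 1" by simp
    show "cl_mult (4*p) (Jop (gen (4*j-3))) (pdX ix F (4*j-3) x) C + cl_mult (4*p) (Jop (gen (4*j-2))) (pdX ix F (4*j-2) x) C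
      + cl_mult (4*p) (Jop (gen (4*j-1))) (pdX ix F (4*j-1) x) C + cl_mult (4*p) (Jop (gen (4*j))) (pdX ix F (4*j) x) C =
      cl_mult (4*p) (gen (4*j-1)) (pdX ix F (4*j-3) x) C - cl_mult (4*p) (gen (4*j)) (pdX ix F (4*j-2) x) C
     - cl_mult (4*p) (gen (4*j-3)) (pdX ix F (4*j-1) x) C + cl_mult (4*p) (gen (4*j-2)) (pdX ix F (4*j) x) C"
      unfolding Jop_1[OF j] Jop_2[OF j] Jop_3[OF j] Jop_4[OF j] lin by simp
  qed
  also have "\<dots> = (\<Sum>j\<in>{1..p}. 2*((cl_mult (4*p) (wf (2*j-1)) (dz ix F (2*j) x) C
        - cl_mult (4*p) (wf (2*j)) (dz ix F (2*j-1) x) C) -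
       (cl_mult (4*p) (wfd (2*j-1)) (dzb ix F (2*j) x) C
        - cl_mult (4*p) (wfd (2*j)) (dzb ix F (2*j-1) x) C)))"
  proof (rule sum.cong[OF refl])
    fix j assume "j \<in> {1..p}"
    then have j: "j \<ge> 1" by simp
    show "cl_mult (4*p) (gen (4*j-1)) (pdX ix F (4*j-3) x) C - cl_mult (4*p) (gen (4*j)) (pdX ix F (4*j-2) x) C
     - cl_mult (4*p) (gen (4*j-3)) (pdX ix F (4*j-1) x) C + cl_mult (4*p) (gen (4*j-2)) (pdX ix F (4*j) x) C =
       2*((cl_mult (4*p) (wf (2*j-1)) (dz ix F (2*j) x) C
        - cl_mult (4*p) (wf (2*j)) (dz ix F (2*j-1) x) C) -
       (cl_mult (4*p) (wfd (2*j-1)) (dzb ix F (2*j) x) C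
        - cl_mult (4*p) (wfd (2*j)) (dzb ix F (2*j-1) x) C))"
    proof -
      define P1 where "P1 = pdX ix F (4*j-3) x"
      define P2 where "P2 = pdX ix F (4*j-2) x"
      define P3 where "P3 = pdX ix F (4*j-1) x"
      define P4 where "P4 = pdX ix F (4*j) x"
      have h1: "pdX ix F (2*(2*j-1)-1) x = P1" unfolding P1_def ar1[OF j] ..
      have h2: "pdX ix F (2*(2*j-1)) x = P2" unfolding P2_def ar2[OF j] ..
      have h3: "pdX ix F (2*(2*j)-1) x = P3" unfolding P3_def ar3 ..
      have h4: "pdX ix F (2*(2*j)) x = P4" unfolding P4_def ar4 ..
      define a where "a = 2*j-1"
      define b where "b = 2*j"
      show ?thesis
        unfolding gJ1[OF j] gJ2[OF j] gJ3 gJ4 dz_def dzb_def lin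
        unfolding P1_def[symmetric] P2_def[symmetric] P3_def[symmetric] P4_def[symmetric] h1 h2 h3 h4
        unfolding a_def[symmetric]
        unfolding b_def[symmetric]
        by (simp add: algebra_simps)
    qed
  qed
  also have "\<dots> = 2*(Dz_J p ix F x C - Dz_dag_J p ix F x C)"
    unfolding Dz_J_def Dz_dag_J_def cl_sum_def cl_add_def cl_scale_def
      sum_subtractf[symmetric] sum_distrib_left
    by (rule sum.cong[OF refl], simp add: algebra_simps)
  finally show ?thesis .
qed

lemma D_K: "dirac p ix Kop F x C = 2*\<i>*(Dz_J p ix F x C + Dz_dag_J p ix F x C)"
proof -
  have "dirac p ix Kop F x C = (\<Sum>j\<in>{1..p}.
     cl_mult (4*p) (gen (4*j)) (pdX ix F (4*j-3) x) C + cl_mult (4*p) (gen (4*j-1)) (pdX ix F (4*j-2) x) C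
     - cl_mult (4*p) (gen (4*j-2)) (pdX ix F (4*j-1) x) C - cl_mult (4*p) (gen (4*j-3)) (pdX ix F (4*j) x) C)"
    unfolding dirac_def cl_sum_def sum_quads
  proof (rule sum.cong[OF refl])
    fix j assume "j \<in> {1..p}"
    then have j: "j \<ge> 1" by simp
    show "cl_mult (4*p) (Kop (gen (4*j-3))) (pdX ix F (4*j-3) x) C + cl_mult (4*p) (Kop (gen (4*j-2))) (pdX ix F (4*j-2) x) C
      + cl_mult (4*p) (Kop (gen (4*j-1))) (pdX ix F (4*j-1) x) C + cl_mult (4*p) (Kop (gen (4*j))) (pdX ix F (4*j) x) C =
      cl_mult (4*p) (gen (4*j)) (pdX ix F (4*j-3) x) C + cl_mult (4*p) (gen (4*j-1)) (pdX ix F (4*j-2) x) C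
     - cl_mult (4*p) (gen (4*j-2)) (pdX ix F (4*j-1) x) C - cl_mult (4*p) (gen (4*j-3)) (pdX ix F (4*j) x) C"
      unfolding Kop_1[OF j] Kop_2[OF j] Kop_3[OF j] Kop_4[OF j] lin by simp
  qed
  also have "\<dots> = (\<Sum>j\<in>{1..p}. 2*\<i>*((cl_mult (4*p) (wf (2*j-1)) (dz ix F (2*j) x) C
        - cl_mult (4*p) (wf (2*j)) (dz ix F (2*j-1) x) C) +
       (cl_mult (4*p) (wfd (2*j-1)) (dzb ix F (2*j) x) C
        - cl_mult (4*p) (wfd (2*j)) (dzb ix F (2*j-1) x) C)))"
  proof (rule sum.cong[OF refl])
    fix j assume "j \<in> {1..p}"
    then have j: "j \<ge> 1" by simp
    show "cl_mult (4*p) (gen (4*j)) (pdX ix F (4*j-3) x) C + cl_mult (4*p) (gen (4*j-1)) (pdX ix F (4*j-2) x) C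
     - cl_mult (4*p) (gen (4*j-2)) (pdX ix F (4*j-1) x) C - cl_mult (4*p) (gen (4*j-3)) (pdX ix F (4*j) x) C =
       2*\<i>*((cl_mult (4*p) (wf (2*j-1)) (dz ix F (2*j) x) C
        - cl_mult (4*p) (wf (2*j)) (dz ix F (2*j-1) x) C) +
       (cl_mult (4*p) (wfd (2*j-1)) (dzb ix F (2*j) x) C
        - cl_mult (4*p) (wfd (2*j)) (dzb ix F (2*j-1) x) C))"
    proof -
      define P1 where "P1 = pdX ix F (4*j-3) x"
      define P2 where "P2 = pdX ix F (4*j-2) x"
      define P3 where "P3 = pdX ix F (4*j-1) x"
      define P4 where "P4 = pdX ix F (4*j) x"
      have h1: "pdX ix F (2*(2*j-1)-1) x = P1" unfolding P1_def ar1[OF j] ..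
      have h2: "pdX ix F (2*(2*j-1)) x = P2" unfolding P2_def ar2[OF j] ..
      have h3: "pdX ix F (2*(2*j)-1) x = P3" unfolding P3_def ar3 ..
      have h4: "pdX ix F (2*(2*j)) x = P4" unfolding P4_def ar4 ..
      define a where "a = 2*j-1"
      define b where "b = 2*j"
      show ?thesis
        unfolding gJ1[OF j] gJ2[OF j] gJ3 gJ4 dz_def dzb_def lin
        unfolding P1_def[symmetric] P2_def[symmetric] P3_def[symmetric] P4_def[symmetric] h1 h2 h3 h4
        unfolding a_def[symmetric]
        unfolding b_def[symmetric]
        by (simp add: algebra_simps)
    qed
  qed
  also have "\<dots> = 2*\<i>*(Dz_J p ix F x C + Dz_dag_J p ix F x C)"
    unfolding Dz_J_def Dz_dag_J_def cl_sum_def cl_add_def cl_scale_def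
      sum.distrib[symmetric] sum_distrib_left
    by (rule sum.cong[OF refl], simp add: algebra_simps)
  finally show ?thesis .
qed

lemma alg1: "(2*(a-b) = 0 \<and> -2*\<i>*(a+b) = 0) \<longleftrightarrow> (a = 0 \<and> (b::complex) = 0)"
  by auto
lemma alg2: "(2*(a-b) = 0 \<and> 2*\<i>*(a+b) = 0) \<longleftrightarrow> (a = 0 \<and> (b::complex) = 0)"
  by auto

theorem proposition2:
  fixes p :: nat and ix :: "nat \<Rightarrow> 'n::finite" and \<Omega> :: "(real^'n) set"
    and F :: "real^'n \<Rightarrow> cl"
  assumes "bij_betw ix {1..4*p} UNIV"
    and "open \<Omega>"
    and "\<forall>x\<in>\<Omega>. \<forall>A. (\<lambda>y. F y A) differentiable (at x)"
    and "\<forall>x\<in>\<Omega>. F x \<in> spinor_space p"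
  shows "q_monogenic p ix \<Omega> F \<longleftrightarrow>
    (\<forall>x\<in>\<Omega>. Dz p ix F x = cl_zero \<and> Dz_dag p ix F x = cl_zero \<and>
             Dz_J p ix F x = cl_zero \<and> Dz_dag_J p ix F x = cl_zero)"
proof -
  have "(dirac p ix id F x = cl_zero \<and> dirac p ix Iop F x = cl_zero \<and>
      dirac p ix Jop F x = cl_zero \<and> dirac p ix Kop F x = cl_zero) \<longleftrightarrow>
      (Dz p ix F x = cl_zero \<and> Dz_dag p ix F x = cl_zero \<and>
             Dz_J p ix F x = cl_zero \<and> Dz_dag_J p ix F x = cl_zero)" for x
  proof -
    have "(dirac p ix id F x = cl_zero \<and> dirac p ix Iop F x = cl_zero \<and>
      dirac p ix Jop F x = cl_zero \<and> dirac p ix Kop F x = cl_zero) \<longleftrightarrow>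
      (\<forall>C. (2*(Dz p ix F x C - Dz_dag p ix F x C) = 0 \<and> -2*\<i>*(Dz p ix F x C + Dz_dag p ix F x C) = 0)
        \<and> (2*(Dz_J p ix F x C - Dz_dag_J p ix F x C) = 0 \<and> 2*\<i>*(Dz_J p ix F x C + Dz_dag_J p ix F x C) = 0))"
      unfolding fun_eq_iff cl_zero_def D_id D_I D_J D_K by blast
    also have "\<dots> \<longleftrightarrow> (\<forall>C. (Dz p ix F x C = 0 \<and> Dz_dag p ix F x C = 0) \<and>
        (Dz_J p ix F x C = 0 \<and> Dz_dag_J p ix F x C = 0))"
      unfolding alg1 alg2 ..
    also have "\<dots> \<longleftrightarrow> (Dz p ix F x = cl_zero \<and> Dz_dag p ix F x = cl_zero \<and>
             Dz_J p ix F x = cl_zero \<and> Dz_dag_J p ix F x = cl_zero)"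
      unfolding fun_eq_iff cl_zero_def by blast
    finally show ?thesis .
  qed
  then show ?thesis unfolding q_monogenic_def by blast
qed

end
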